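(* Let $n\ge2$, let $\mathcal{P}$ be a distribution on $\mathcal{Z}=\mathcal{X}\times\mathcal{Y}$, let $h:\mathcal{Z}^{n-1}\times\mathcal{X}\to\mathbb{R}^d$ be a deterministic prediction function having $\beta$-train stability and $\beta_1$-test stability, and let $\ell:\mathbb{R}^d\times\mathcal{Y}\to[0,1]$ be $L$-Lipschitz in its first argument: $|\ell(r,y)-\ell(r',y)|\le L\|r-r'\|$. Then \[ \mathrm{gen}(h)\le\sqrt{4c_nL\sqrt{nd\,(n\beta^2+2\beta_1^2)}},\qquad c_n=\frac{n}{n-1}. \]
   Context: For datasets $z^{n-1},\hat z^{n-1}\in\mathcal{Z}^{n-1}$ differing in at most one entry, say $z_1\ne\hat z_1$ and $z_k=\hat z_k$ for $k\ne1$: $h$ has $\beta$-train stability if $\|h(z^{n-1},x_k)-h(\hat z^{n-1},x_k)\|^2\le\beta^2$ for all $k\ne1$ (where $x_k$ is the input of $z_k$), for all such pairs; and $\beta_1$-test stability if $\|h(z^{n-1},x')-h(\hat z^{n-1},x')\|^2\le\beta_1^2$ for all $x'\in\mathcal{X}$ and all such pairs. With true loss $\mathcal{L}(h,z^m)=\mathbb{E}_{(x',y')\sim\mathcal{P}}\ell(h(z^m,x'),y')$ and empirical loss $\widehat{\mathcal{L}}(h,z^m)=\frac1m\sum_{i}\ell(h(z^m,x_i),y_i)$, $\mathrm{gen}(h)=|\mathbb{E}_{Z^{n-1}\sim\mathcal{P}^{n-1}}[\widehat{\mathcal{L}}(h,Z^{n-1})-\mathcal{L}(h,Z^{n-1})]|$.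 *)

theory Defs
  imports "HOL-Probability.Probability"
begin

text \<open>A dataset of size m is an extensional function from {..<m} to X \<times> Y.
  A prediction function h maps a dataset and an input x to a vector in R^d
  (the dimension d is CARD('d)).\<close>

definition train_stable ::
  "nat \<Rightarrow> ((nat \<Rightarrow> 'x \<times> 'y) \<Rightarrow> 'x \<Rightarrow> real^'d) \<Rightarrow> real \<Rightarrow> bool" where
  "train_stable m h \<beta> \<longleftrightarrow>
     (\<forall>z \<in> {..<m} \<rightarrow>\<^sub>E UNIV. \<forall>z' \<in> {..<m} \<rightarrow>\<^sub>E UNIV. \<forall>i<m.
        (\<forall>k<m. k \<noteq> i \<longrightarrow> z k = z' k) \<longrightarrow>
        (\<forall>k<m. k \<noteq> i \<longrightarrow> (norm (h z (fst (z k)) - h z' (fst (z k))))\<^sup>2 \<le> \<beta>\<^sup>2))"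

definition test_stable ::
  "nat \<Rightarrow> ((nat \<Rightarrow> 'x \<times> 'y) \<Rightarrow> 'x \<Rightarrow> real^'d) \<Rightarrow> real \<Rightarrow> bool" where
  "test_stable m h \<beta>\<^sub>1 \<longleftrightarrow>
     (\<forall>z \<in> {..<m} \<rightarrow>\<^sub>E UNIV. \<forall>z' \<in> {..<m} \<rightarrow>\<^sub>E UNIV. \<forall>i<m.
        (\<forall>k<m. k \<noteq> i \<longrightarrow> z k = z' k) \<longrightarrow>
        (\<forall>x'. (norm (h z x' - h z' x'))\<^sup>2 \<le> \<beta>\<^sub>1\<^sup>2))"

definition true_loss ::
  "('x \<times> 'y) measure \<Rightarrow> (real^'d \<Rightarrow> 'y \<Rightarrow> real) \<Rightarrow>
   ((nat \<Rightarrow> 'x \<times> 'y) \<Rightarrow> 'x \<Rightarrow> real^'d) \<Rightarrow> (nat \<Rightarrow> 'x \<times> 'y) \<Rightarrow> real" where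
  "true_loss P loss h z = (\<integral>w. loss (h z (fst w)) (snd w) \<partial>P)"

definition emp_loss ::
  "nat \<Rightarrow> (real^'d \<Rightarrow> 'y \<Rightarrow> real) \<Rightarrow>
   ((nat \<Rightarrow> 'x \<times> 'y) \<Rightarrow> 'x \<Rightarrow> real^'d) \<Rightarrow> (nat \<Rightarrow> 'x \<times> 'y) \<Rightarrow> real" where
  "emp_loss m loss h z = (1 / real m) * (\<Sum>i<m. loss (h z (fst (z i))) (snd (z i)))"

definition gen ::
  "nat \<Rightarrow> ('x \<times> 'y) measure \<Rightarrow> (real^'d \<Rightarrow> 'y \<Rightarrow> real) \<Rightarrow>
   ((nat \<Rightarrow> 'x \<times> 'y) \<Rightarrow> 'x \<Rightarrow> real^'d) \<Rightarrow> real" where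
  "gen m P loss h = \<bar>\<integral>z. emp_loss m loss h z - true_loss P loss h z \<partial>(PiM {..<m} (\<lambda>_. P))\<bar>"

end

theory Submission
  imports Defs
begin

lemma abs_int_bound:
  fixes F :: "'a \<Rightarrow> real"
  assumes "prob_space M" "\<And>x. x \<in> space M \<Longrightarrow> \<bar>F x\<bar> \<le> t"
  shows "\<bar>integral\<^sup>L M F\<bar> \<le> t"
proof -
  interpret prob_space M by fact
  obtain x0 where "x0 \<in> space M" using not_empty by blast
  hence t: "0 \<le> t" using assms(2) by (meson abs_ge_zero order_trans)
  have "\<bar>integral\<^sup>L M F\<bar> \<le> (\<integral>x. \<bar>F x\<bar> \<partial>M)" by (rule integral_abs_bound)
  also have "\<dots> \<le> t"
  proof (cases "integrable M (\<lambda>x. \<bar>F x\<bar>)")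
    case True thus ?thesis by (intro integral_le_const) (auto intro!: AE_I2 simp: assms)
  next
    case False thus ?thesis using t by (simp add: not_integrable_integral_eq)
  qed
  finally show ?thesis .
qed

lemma int_bdd:
  fixes f :: "'a \<Rightarrow> real"
  assumes "prob_space M" "f \<in> borel_measurable M" "\<And>x. x \<in> space M \<Longrightarrow> \<bar>f x\<bar> \<le> B"
  shows "integrable M f"
proof -
  interpret prob_space M by fact
  show ?thesis by (rule integrable_const_bound[where B=B]) (auto intro!: AE_I2 simp: assms)
qed

lemma setup_lemma:
  fixes P :: "('x \<times> 'y) measure"
    and h :: "(nat \<Rightarrow> 'x \<times> 'y) \<Rightarrow> 'x \<Rightarrow> real^'d"
    and loss :: "real^'d \<Rightarrow> 'y \<Rightarrow> real"
  assumes "prob_space P"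
    and meas: "(\<lambda>(z, w). loss (h z (fst w)) (snd w))
               \<in> borel_measurable (PiM {..<m} (\<lambda>_. P) \<Otimes>\<^sub>M P)"
    and lb: "\<And>r y. 0 \<le> loss r y \<and> loss r y \<le> 1"
    and "i < m"
  shows "integrable (PiM {..<m} (\<lambda>_. P))
           (\<lambda>z. loss (h z (fst (z i))) (snd (z i)) - true_loss P loss h z)"
    and "\<And>z. 0 \<le> true_loss P loss h z \<and> true_loss P loss h z \<le> 1"
proof -
  interpret P: prob_space P by fact
  let ?M = "PiM {..<m} (\<lambda>_. P)"
  have pM: "prob_space ?M" by (rule prob_space_PiM) (simp add: assms(1))
  show tl: "0 \<le> true_loss P loss h z \<and> true_loss P loss h z \<le> 1" for z
  proof
    show "0 \<le> true_loss P loss h z" unfolding true_loss_def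
      by (intro integral_nonneg_AE AE_I2) (simp add: lb)
    have "\<bar>true_loss P loss h z\<bar> \<le> 1" unfolding true_loss_def
      by (rule abs_int_bound[OF assms(1)]) (smt (verit) lb)
    thus "true_loss P loss h z \<le> 1" by simp
  qed
  have m1: "(\<lambda>z. (z, z i)) \<in> measurable ?M (?M \<Otimes>\<^sub>M P)"
    using \<open>i < m\<close> by (intro measurable_Pair measurable_ident_sets measurable_component_singleton) auto
  have f1: "(\<lambda>z. loss (h z (fst (z i))) (snd (z i))) \<in> borel_measurable ?M"
    using measurable_compose[OF m1 meas] by simp
  have f2: "(\<lambda>z. true_loss P loss h z) \<in> borel_measurable ?M"
    unfolding true_loss_def
    using P.borel_measurable_lebesgue_integral[of "\<lambda>z w. loss (h z (fst w)) (snd w)", OF meas] by simp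
  show "integrable ?M (\<lambda>z. loss (h z (fst (z i))) (snd (z i)) - true_loss P loss h z)"
    apply (rule int_bdd[OF pM, where B=1])
    using f1 f2 apply measurable
    using tl lb by (smt (verit))
qed

lemma key_lemma:
  fixes P :: "('x \<times> 'y) measure"
    and h :: "(nat \<Rightarrow> 'x \<times> 'y) \<Rightarrow> 'x \<Rightarrow> real^'d"
    and loss :: "real^'d \<Rightarrow> 'y \<Rightarrow> real"
  assumes "prob_space P"
    and meas: "(\<lambda>(z, w). loss (h z (fst w)) (snd w))
               \<in> borel_measurable (PiM {..<m} (\<lambda>_. P) \<Otimes>\<^sub>M P)"
    and ts: "test_stable m h \<beta>\<^sub>1"
    and lb: "\<And>r y. 0 \<le> loss r y \<and> loss r y \<le> 1"
    and lip: "\<And>r r' y. \<bar>loss r y - loss r' y\<bar> \<le> L * norm (r - r')"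
    and L0: "0 \<le> L"
    and "i < m"
  shows "\<bar>\<integral>z. loss (h z (fst (z i))) (snd (z i)) - true_loss P loss h z \<partial>PiM {..<m} (\<lambda>_. P)\<bar>
          \<le> L * \<bar>\<beta>\<^sub>1\<bar>"
proof -
  interpret P: prob_space P by fact
  interpret PS: product_sigma_finite "\<lambda>_. P"
    by unfold_locales
  interpret PP: pair_sigma_finite P P
    proof qed
  let ?M = "PiM {..<m} (\<lambda>_. P)"
  define I where "I = {..<m} - {i}"
  have ins: "insert i I = {..<m}" "finite I" "i \<notin> I" using \<open>i < m\<close> by (auto simp: I_def)
  define \<Psi> where "\<Psi> = (\<lambda>z w. loss (h z (fst w)) (snd w))"
  have meas\<Psi>: "(\<lambda>(z, w). \<Psi> z w) \<in> borel_measurable (?M \<Otimes>\<^sub>M P)" using meas by (simp add: \<Psi>_def)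
  define F where "F = (\<lambda>z. loss (h z (fst (z i))) (snd (z i)) - true_loss P loss h z)"
  have intF: "integrable (PiM (insert i I) (\<lambda>_. P)) F"
    unfolding F_def ins(1) by (rule setup_lemma(1)[OF assms(1) meas lb \<open>i < m\<close>])
  have "(\<integral>z. F z \<partial>?M) = (\<integral>X. (\<integral>y. F (X(i:=y)) \<partial>P) \<partial>PiM I (\<lambda>_. P))"
    using PS.product_integral_insert[OF ins(2,3) intF] by (simp add: ins(1))
  also have "\<bar>\<dots>\<bar> \<le> L * \<bar>\<beta>\<^sub>1\<bar>"
  proof (rule abs_int_bound)
    show "prob_space (PiM I (\<lambda>_. P))" by (rule prob_space_PiM) (simp add: assms(1))
    fix X assume X: "X \<in> space (PiM I (\<lambda>_. P))"
    define \<phi> where "\<phi> = (\<lambda>a b. \<Psi> (X(i:=a)) b)"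
    have upd: "(\<lambda>a. X(i:=a)) \<in> measurable P ?M"
      using measurable_component_update[OF X ins(3)] by (simp add: ins(1))
    have ext: "X(i:=a) \<in> {..<m} \<rightarrow>\<^sub>E UNIV" for a
    proof -
      have "X \<in> I \<rightarrow>\<^sub>E UNIV" using X by (auto simp: space_PiM PiE_def)
      hence "X(i:=a) \<in> insert i I \<rightarrow>\<^sub>E UNIV" by (intro PiE_fun_upd) auto
      thus ?thesis by (simp add: ins(1))
    qed
    have pt: "\<bar>\<phi> y y - \<phi> w y\<bar> \<le> L * \<bar>\<beta>\<^sub>1\<bar>" for y w
    proof -
      have "(norm (h (X(i:=y)) (fst y) - h (X(i:=w)) (fst y)))\<^sup>2 \<le> \<beta>\<^sub>1\<^sup>2"
        using ts ext[of y] ext[of w] \<open>i < m\<close> unfolding test_stable_def by auto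
      hence n: "norm (h (X(i:=y)) (fst y) - h (X(i:=w)) (fst y)) \<le> \<bar>\<beta>\<^sub>1\<bar>"
        by (metis abs_ge_zero power2_abs power2_le_imp_le)
      have "\<bar>\<phi> y y - \<phi> w y\<bar> \<le> L * norm (h (X(i:=y)) (fst y) - h (X(i:=w)) (fst y))"
        unfolding \<phi>_def \<Psi>_def by (rule lip)
      also have "\<dots> \<le> L * \<bar>\<beta>\<^sub>1\<bar>" using n L0 by (rule mult_left_mono)
      finally show ?thesis .
    qed
    have b\<phi>: "\<bar>\<phi> a b\<bar> \<le> 1" for a b using lb[of _ "snd b"] by (simp add: \<phi>_def \<Psi>_def abs_le_iff)
    have "(\<lambda>p. (\<lambda>(z, w). \<Psi> z w) (X(i:=fst p), snd p)) \<in> borel_measurable (P \<Otimes>\<^sub>M P)"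
      by (rule measurable_compose[OF _ meas\<Psi>]) (intro measurable_Pair measurable_compose[OF measurable_fst upd] measurable_snd)
    hence meas\<phi>: "(\<lambda>(a, b). \<phi> a b) \<in> borel_measurable (P \<Otimes>\<^sub>M P)"
      by (simp add: \<phi>_def case_prod_beta')
    have meas\<phi>s: "(\<lambda>(a, b). \<phi> b a) \<in> borel_measurable (P \<Otimes>\<^sub>M P)"
      using measurable_compose[OF measurable_Pair[OF measurable_snd measurable_fst] meas\<phi>]
      by (simp add: case_prod_beta')
    have pPP: "prob_space (P \<Otimes>\<^sub>M P)" by (rule prob_space_pair) (rule assms(1))+
    have int\<phi>: "integrable (P \<Otimes>\<^sub>M P) (\<lambda>(a, b). \<phi> a b)"
      by (rule int_bdd[OF pPP meas\<phi>, where B=1]) (auto simp: b\<phi>)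
    have md: "(\<lambda>y. \<phi> y y) \<in> borel_measurable P"
      using measurable_compose[OF measurable_Pair[OF measurable_ident_sets[OF refl] measurable_ident_sets[OF refl]] meas\<phi>]
      by simp
    have intd: "integrable P (\<lambda>y. \<phi> y y)"
      by (rule int_bdd[OF assms(1) md, where B=1]) (auto simp: b\<phi>)
    have intw: "integrable P (\<lambda>w. \<phi> w y)" if "y \<in> space P" for y
      by (rule int_bdd[OF assms(1), where B=1]) (use measurable_Pair1[OF meas\<phi> that] in \<open>auto simp: b\<phi>\<close>)
    have bi: "\<bar>\<integral>w. \<phi> y w \<partial>P\<bar> \<le> 1" for y
      by (rule abs_int_bound[OF assms(1)]) (simp add: b\<phi>)
    have inti: "integrable P (\<lambda>y. \<integral>w. \<phi> y w \<partial>P)"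
      by (rule int_bdd[OF assms(1) P.borel_measurable_lebesgue_integral[OF meas\<phi>], where B=1]) (auto simp: bi)
    have bi2: "\<bar>\<integral>w. \<phi> w y \<partial>P\<bar> \<le> 1" for y
      by (rule abs_int_bound[OF assms(1)]) (simp add: b\<phi>)
    have inti2: "integrable P (\<lambda>y. \<integral>w. \<phi> w y \<partial>P)"
      by (rule int_bdd[OF assms(1) P.borel_measurable_lebesgue_integral[OF meas\<phi>s], where B=1]) (auto simp: bi2)
    have eqF: "F (X(i:=y)) = \<phi> y y - (\<integral>w. \<phi> y w \<partial>P)" for y
      by (simp add: F_def \<phi>_def \<Psi>_def true_loss_def)
    have fub: "(\<integral>y. \<integral>w. \<phi> y w \<partial>P \<partial>P) = (\<integral>y. \<integral>w. \<phi> w y \<partial>P \<partial>P)"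
      using PP.Fubini_integral[OF int\<phi>] by simp
    have "(\<integral>y. F (X(i:=y)) \<partial>P) = (\<integral>y. \<phi> y y \<partial>P) - (\<integral>y. \<integral>w. \<phi> y w \<partial>P \<partial>P)"
      unfolding eqF by (rule Bochner_Integration.integral_diff[OF intd inti])
    also have "\<dots> = (\<integral>y. \<phi> y y \<partial>P) - (\<integral>y. \<integral>w. \<phi> w y \<partial>P \<partial>P)" by (simp add: fub)
    also have "\<dots> = (\<integral>y. \<phi> y y - (\<integral>w. \<phi> w y \<partial>P) \<partial>P)"
      by (rule Bochner_Integration.integral_diff[OF intd inti2, symmetric])
    also have "\<dots> = (\<integral>y. (\<integral>w. \<phi> y y - \<phi> w y \<partial>P) \<partial>P)"
    proof (rule Bochner_Integration.integral_cong[OF refl])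
      fix y assume yP: "y \<in> space P"
      have "(\<integral>w. \<phi> y y - \<phi> w y \<partial>P) = (\<integral>w. \<phi> y y \<partial>P) - (\<integral>w. \<phi> w y \<partial>P)"
        by (rule Bochner_Integration.integral_diff[OF _ intw[OF yP]]) simp
      thus "\<phi> y y - (\<integral>w. \<phi> w y \<partial>P) = (\<integral>w. \<phi> y y - \<phi> w y \<partial>P)"
        by (simp add: P.prob_space)
    qed
    finally have eq: "(\<integral>y. F (X(i:=y)) \<partial>P) = (\<integral>y. (\<integral>w. \<phi> y y - \<phi> w y \<partial>P) \<partial>P)" .
    show "\<bar>\<integral>y. F (X(i:=y)) \<partial>P\<bar> \<le> L * \<bar>\<beta>\<^sub>1\<bar>"
      unfolding eq
      by (rule abs_int_bound[OF assms(1)], rule abs_int_bound[OF assms(1)], rule pt)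
  qed
  finally show ?thesis by (simp add: F_def)
qed

theorem theorem5:
  fixes P :: "('x \<times> 'y) measure"
    and h :: "(nat \<Rightarrow> 'x \<times> 'y) \<Rightarrow> 'x \<Rightarrow> real^'d"
    and loss :: "real^'d \<Rightarrow> 'y \<Rightarrow> real"
    and n :: nat and \<beta> \<beta>\<^sub>1 L :: real
  assumes "n \<ge> 2"
    and "prob_space P"
    and meas: "(\<lambda>(z, w). loss (h z (fst w)) (snd w))
               \<in> borel_measurable (PiM {..<n-1} (\<lambda>_. P) \<Otimes>\<^sub>M P)"
    and "train_stable (n-1) h \<beta>"
    and "test_stable (n-1) h \<beta>\<^sub>1"
    and "\<And>r y. 0 \<le> loss r y \<and> loss r y \<le> 1"
    and "\<And>r r' y. \<bar>loss r y - loss r' y\<bar> \<le> L * norm (r - r')"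
  shows "gen (n-1) P loss h
           \<le> sqrt (4 * (real n / (real n - 1)) * L *
                   sqrt (real n * real CARD('d) * (real n * \<beta>\<^sup>2 + 2 * \<beta>\<^sub>1\<^sup>2)))"
proof -
  define m where "m = n - 1"
  have m1: "1 \<le> m" using assms(1) by (simp add: m_def)
  have m0: "0 < m" using m1 by simp
  let ?M = "PiM {..<m} (\<lambda>_. P)"
  have pM: "prob_space ?M" by (rule prob_space_PiM) (simp add: assms(2))
  have L0: "0 \<le> L"
  proof -
    obtain k :: 'd where True by simp
    obtain y :: 'y where True by simp
    have "\<bar>loss 0 y - loss (axis k 1) y\<bar> \<le> L * norm (0 - axis k (1::real))" by (rule assms(7))
    thus ?thesis by (simp add: norm_axis_1)
  qed
  define t where "t = L * \<bar>\<beta>\<^sub>1\<bar>"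
  have t0: "0 \<le> t" using L0 by (simp add: t_def)
  define f where "f = (\<lambda>i z. loss (h z (fst (z i))) (snd (z i)) - true_loss P loss h z)"
  have eqd: "emp_loss m loss h z - true_loss P loss h z = (1 / real m) * (\<Sum>i<m. f i z)" for z
    using m1 by (simp add: emp_loss_def f_def sum_subtractf field_simps)
  have intf: "integrable ?M (f i)" if "i < m" for i
    unfolding f_def by (rule setup_lemma(1)[OF assms(2) meas[folded m_def] assms(6) that])
  have G_eq: "gen m P loss h = \<bar>(1 / real m) * (\<Sum>i<m. integral\<^sup>L ?M (f i))\<bar>"
    unfolding gen_def eqd by (simp add: Bochner_Integration.integral_sum intf)
  have G1: "gen m P loss h \<le> t"
  proof -
    have "\<bar>\<Sum>i<m. integral\<^sup>L ?M (f i)\<bar> \<le> (\<Sum>i<m. t)"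
      by (rule order_trans[OF sum_abs sum_mono]) 
         (unfold f_def t_def, rule key_lemma[OF assms(2) meas[folded m_def] assms(5)[folded m_def] assms(6) assms(7) L0], simp)
    hence "\<bar>\<Sum>i<m. integral\<^sup>L ?M (f i)\<bar> \<le> real m * t" by simp
    thus ?thesis unfolding G_eq using m1 by (simp add: abs_mult field_simps)
  qed
  have G2: "gen m P loss h \<le> 1"
    unfolding gen_def
  proof (rule abs_int_bound[OF pM])
    fix z
    have "0 \<le> emp_loss m loss h z \<and> emp_loss m loss h z \<le> 1"
    proof
      show "0 \<le> emp_loss m loss h z" unfolding emp_loss_def
        by (intro mult_nonneg_nonneg sum_nonneg) (auto simp: assms(6))
      have "(\<Sum>i<m. loss (h z (fst (z i))) (snd (z i))) \<le> (\<Sum>i<m. 1)"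
        by (rule sum_mono) (simp add: assms(6))
      thus "emp_loss m loss h z \<le> 1" unfolding emp_loss_def using m1 by (simp add: field_simps)
    qed
    moreover have "0 \<le> true_loss P loss h z \<and> true_loss P loss h z \<le> 1"
      by (rule setup_lemma(2)[OF assms(2) meas[folded m_def] assms(6) m0])
    ultimately show "\<bar>emp_loss m loss h z - true_loss P loss h z\<bar> \<le> 1" by auto
  qed
  define S where "S = sqrt (real n * real CARD('d) * (real n * \<beta>\<^sup>2 + 2 * \<beta>\<^sub>1\<^sup>2))"
  have nd: "1 \<le> real n * real CARD('d)" using assms(1)
  proof -
    have "1 \<le> CARD('d)" by (simp add: Suc_leI)
    hence "1 * 1 \<le> n * CARD('d)" using assms(1) by (intro mult_le_mono) auto
    hence "1 \<le> n * CARD('d)" by simp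
    hence "(1::real) \<le> real (n * CARD('d))" by linarith
    thus ?thesis by simp
  qed
  have "\<beta>\<^sub>1\<^sup>2 \<le> real n * real CARD('d) * (real n * \<beta>\<^sup>2 + 2 * \<beta>\<^sub>1\<^sup>2)"
  proof -
    have "\<beta>\<^sub>1\<^sup>2 \<le> real n * \<beta>\<^sup>2 + 2 * \<beta>\<^sub>1\<^sup>2" by simp
    also have "\<dots> \<le> real n * real CARD('d) * (real n * \<beta>\<^sup>2 + 2 * \<beta>\<^sub>1\<^sup>2)"
      using mult_right_mono[OF nd, of "real n * \<beta>\<^sup>2 + 2 * \<beta>\<^sub>1\<^sup>2"] by simp
    finally show ?thesis .
  qed
  hence S1: "\<bar>\<beta>\<^sub>1\<bar> \<le> S" unfolding S_def by (metis real_sqrt_abs real_sqrt_le_mono)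
  have c1: "1 \<le> real n / (real n - 1)" using assms(1) by (simp add: field_simps)
  have "t \<le> 4 * (real n / (real n - 1)) * L * S"
  proof -
    have "t \<le> L * S" unfolding t_def using S1 L0 by (rule mult_left_mono)
    also have "\<dots> \<le> (4 * (real n / (real n - 1))) * (L * S)"
    proof -
      have "0 \<le> L * S" using L0 S1 by (meson abs_ge_zero mult_nonneg_nonneg order_trans)
      moreover have "1 \<le> 4 * (real n / (real n - 1))" using c1 by linarith
      ultimately show ?thesis using mult_right_mono[of 1 "4 * (real n / (real n - 1))" "L * S"] by simp
    qed
    finally show ?thesis by (simp add: mult.assoc)
  qed
  moreover have "(gen m P loss h)\<^sup>2 \<le> t"
  proof -
    have g0: "0 \<le> gen m P loss h" by (simp add: gen_def)
    have "(gen m P loss h)\<^sup>2 \<le> gen m P loss h * 1" unfolding power2_eq_square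
      using G2 g0 by (rule mult_left_mono)
    thus ?thesis using G1 by simp
  qed
  ultimately have "(gen m P loss h)\<^sup>2 \<le> 4 * (real n / (real n - 1)) * L * S" by linarith
  hence "gen m P loss h \<le> sqrt (4 * (real n / (real n - 1)) * L * S)" by (rule real_le_rsqrt)
  thus ?thesis by (simp add: m_def S_def)
qed

end
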